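(* Let $(a_i)_{i\ge0}$ be integers with $a_0=0$, $a_1=2$, $a_{2k}=4$ for all $k\geq1$, and $a_{2k+1}$ arbitrary positive integers for $k\ge1$. Let $\ell=[a_0;a_1,a_2,\dots]$ (an irrational number) and $\theta=e^{2/\ell}$. Then $\mathcal A_\theta$ is infinite. In particular, for every positive integer $c$, if $\theta=e^{4-c+\sqrt{c(c+1)}}$ then $\mathcal A_\theta$ is infinite.
   Context: $\lfloor x\rfloor$ is the floor of $x$; $\log$ is the natural logarithm. For real $\theta>1$ and positive integer $n$, $M'_\theta(n)=\left\lfloor 1/(\theta^{1/n}-1)\right\rfloor$, and $\mathcal A_\theta=\{n\in\mathbb N: M'_\theta(n)\neq \lfloor n/\log\theta-1/2\rfloor\}$, where $\mathbb N$ is the set of positive integers. $[a_0;a_1,a_2,\dots]$ denotes an infinite simple continued fraction. *)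

theory Defs
  imports Complex_Main
begin

fun cfrac_fin :: "(nat \<Rightarrow> int) \<Rightarrow> nat \<Rightarrow> real" where
  "cfrac_fin a 0 = of_int (a 0)"
| "cfrac_fin a (Suc n) = of_int (a 0) + 1 / cfrac_fin (\<lambda>i. a (Suc i)) n"

definition cfrac_val :: "(nat \<Rightarrow> int) \<Rightarrow> real" where
  "cfrac_val a = lim (\<lambda>n. cfrac_fin a n)"

definition Mprime :: "real \<Rightarrow> nat \<Rightarrow> int" where
  "Mprime \<theta> n = \<lfloor>1 / (\<theta> powr (1 / real n) - 1)\<rfloor>"

definition A_set :: "real \<Rightarrow> nat set" where
  "A_set \<theta> = {n. n \<ge> 1 \<and> Mprime \<theta> n \<noteq> \<lfloor>real n / ln \<theta> - 1/2\<rfloor>}"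

end

theory Submission imports Defs begin

lemma exp_upper4:
  fixes x :: real assumes "0 \<le> x" "x \<le> 1/2"
  shows "exp x \<le> 1 + x + x^2/2 + x^3/6 + x^4/12"
proof -
  obtain t where t: "\<bar>t\<bar> \<le> \<bar>x\<bar>" "exp x = (\<Sum>m<4. (x ^ m) / fact m) + (exp t / fact 4) * x ^ 4"
    using Maclaurin_exp_le[of x 4] by blast
  have "exp t \<le> exp (1/2)" using t(1) assms by simp
  also have "\<dots> \<le> 2" by (rule exp_half_le2)
  finally have et: "exp t \<le> 2" .
  have s: "(\<Sum>m<4. (x ^ m) / fact m) = 1 + x + x^2/2 + x^3/6"
    by (simp add: eval_nat_numeral fact_numeral)
  have "(exp t / fact 4) * x ^ 4 \<le> (2 / 24) * x^4"
    using et assms by (intro mult_right_mono) (auto simp: fact_numeral)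
  then show ?thesis using t(2) s by simp
qed

lemma key_exp:
  fixes x :: real assumes "0 < x" "x \<le> 1/2"
  shows "1/x - 1/2 + x/32 \<le> 1 / (exp x - 1)"
proof -
  have e1: "exp x > 1" using assms by simp
  have u: "exp x \<le> 1 + x + x^2/2 + x^3/6 + x^4/12" using exp_upper4 assms by simp
  have pos: "1 - x/2 + x^2/32 > 0" using assms zero_le_power2[of x] by linarith
  have poly: "(1 + x + x^2/2 + x^3/6 + x^4/12) * (1 - x/2 + x^2/32) \<le> 1 + x/2 + x^2/32"
  proof -
    have eq: "(1 + x + x^2/2 + x^3/6 + x^4/12) * (1 - x/2 + x^2/32) - (1 + x/2 + x^2/32)
        = x^3 * (-(5/96) + x/64 - 7*x^2/192 + x^3/384)"
      by (simp add: eval_nat_numeral algebra_simps)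
    have x3: "x^3 \<le> 1/8" using assms power_mono[of x "1/2" 3] by (simp add: power_numeral_reduce)
    have "-(5/96) + x/64 - 7*x^2/192 + x^3/384 \<le> 0" using assms x3 zero_le_power2[of x] by linarith
    then have "x^3 * (-(5/96) + x/64 - 7*x^2/192 + x^3/384) \<le> 0"
      using assms by (intro mult_nonneg_nonpos) auto
    then show ?thesis using eq by linarith
  qed
  have "exp x * (1 - x/2 + x^2/32) \<le> 1 + x/2 + x^2/32"
    using mult_right_mono[OF u less_imp_le[OF pos]] poly by linarith
  then have "(1 - x/2 + x^2/32) * (exp x - 1) \<le> x" by (simp add: algebra_simps diff_divide_distrib)
  then have "(1 - x/2 + x^2/32) / x \<le> 1 / (exp x - 1)"
    using e1 assms by (simp add: field_simps)
  moreover have "(1 - x/2 + x^2/32) / x = 1/x - 1/2 + x/32"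
    using assms by (simp add: field_simps power2_eq_square)
  ultimately show ?thesis by simp
qed

lemma inA:
  fixes L q \<delta> :: real and m :: int and n :: nat
  assumes nq: "real n = q" and L1: "4/9 \<le> L" and L2: "L \<le> 1/2" and q9: "9 \<le> q"
    and d1: "0 < \<delta>" and d2: "\<delta> < 1/(4*q)" and eq: "q*L = 2*m + 1 - \<delta>"
  shows "n \<in> A_set (exp (2/L))"
proof -
  have Lp: "L > 0" using L1 by simp
  have qp: "q > 0" using q9 by simp
  have lnt: "ln (exp (2/L)) = 2/L" by simp
  define x where "x = 2/(L*q)"
  have xp: "0 < x" unfolding x_def using Lp qp by simp
  have "4 \<le> L*q" using mult_mono[OF L1 q9] Lp by simp
  then have xle: "x \<le> 1/2" unfolding x_def using Lp qp by (simp add: field_simps)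
  have pw: "exp (2/L) powr (1 / real n) = exp x"
    unfolding powr_def x_def using nq by simp
  have k: "1/x - 1/2 + x/32 \<le> 1 / (exp x - 1)" by (rule key_exp[OF xp xle])
  have ix: "1/x = L*q/2" unfolding x_def using Lp qp by simp
  have "x/32 = 1/(16*L*q)" unfolding x_def by simp
  moreover have "1/(8*q) \<le> 1/(16*L*q)" using Lp qp L2 by (intro divide_left_mono) auto
  moreover have "\<delta>/2 < 1/(8*q)" using d2 qp by (simp add: field_simps)
  ultimately have "of_int m \<le> 1 / (exp x - 1)" using k ix eq by (simp add: algebra_simps)
  then have M: "m \<le> Mprime (exp (2/L)) n" unfolding Mprime_def pw by (simp add: le_floor_iff)
  have "real n / ln (exp (2/L)) - 1/2 = of_int m - \<delta>/2" using nq eq Lp by (simp add: field_simps)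
  moreover have "\<delta>/2 < 1"
  proof -
    have "\<delta>*36 \<le> \<delta>*(4*q)" using d1 q9 by (intro mult_left_mono) auto
    moreover have "\<delta>*(4*q) < 1" using d2 qp by (simp add: field_simps)
    ultimately show ?thesis by linarith
  qed
  ultimately have F: "\<lfloor>real n / ln (exp (2/L)) - 1/2\<rfloor> = m - 1"
    using d1 by (intro floor_unique) auto
  have "n \<ge> 1" using nq q9 by simp
  then show ?thesis unfolding A_set_def using M F by auto
qed

fun cfr :: "(nat \<Rightarrow> real) \<Rightarrow> nat \<Rightarrow> real" where
  "cfr b 0 = b 0"
| "cfr b (Suc n) = b 0 + 1 / cfr (\<lambda>i. b (Suc i)) n"

lemma cfrac_fin_cfr: "cfrac_fin a n = cfr (\<lambda>i. of_int (a i)) n"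
  by (induction n arbitrary: a) auto

lemma cfr_last: "cfr b (Suc n) = cfr (b(n := b n + 1 / b (Suc n))) n"
proof (induction n arbitrary: b)
  case 0 then show ?case by simp
next
  case (Suc n)
  have "cfr b (Suc (Suc n)) = b 0 + 1 / cfr (\<lambda>i. b (Suc i)) (Suc n)" by simp
  also have "\<dots> = b 0 + 1 / cfr ((\<lambda>i. b (Suc i))(n := b (Suc n) + 1 / b (Suc (Suc n)))) n"
    by (rule arg_cong[where f="\<lambda>y. b 0 + 1/y"]) (rule Suc.IH)
  also have "(\<lambda>i. b (Suc i))(n := b (Suc n) + 1 / b (Suc (Suc n)))
     = (\<lambda>i. (b(Suc n := b (Suc n) + 1 / b (Suc (Suc n)))) (Suc i))" by auto
  finally show ?case by simp
qed

fun Pm :: "(nat \<Rightarrow> 'a::comm_ring_1) \<Rightarrow> nat \<Rightarrow> 'a" where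
  "Pm b 0 = 1"
| "Pm b (Suc 0) = b 0"
| "Pm b (Suc (Suc n)) = b (Suc n) * Pm b (Suc n) + Pm b n"

fun Qm :: "(nat \<Rightarrow> 'a::comm_ring_1) \<Rightarrow> nat \<Rightarrow> 'a" where
  "Qm b 0 = 0"
| "Qm b (Suc 0) = 1"
| "Qm b (Suc (Suc n)) = b (Suc n) * Qm b (Suc n) + Qm b n"

lemma Pm_cong: "(\<And>i. i < n \<Longrightarrow> b i = c i) \<Longrightarrow> Pm b n = Pm c n"
  by (induction b n rule: Pm.induct) auto

lemma Qm_cong: "(\<And>i. i < n \<Longrightarrow> b i = c i) \<Longrightarrow> Qm b n = Qm c n"
  by (induction b n rule: Qm.induct) auto

lemma Pm_of_int: "Pm (\<lambda>i. of_int (a i) :: 'a::comm_ring_1) n = of_int (Pm a n)"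
  by (induction a n rule: Pm.induct) auto

lemma Qm_of_int: "Qm (\<lambda>i. of_int (a i) :: 'a::comm_ring_1) n = of_int (Qm a n)"
  by (induction a n rule: Qm.induct) auto

lemma Pm_upd: "Pm (b(n := b n + 1 / b (Suc n))) (Suc n) = Pm b (Suc n) + Pm b n / b (Suc n)"
  for b :: "nat \<Rightarrow> real"
proof (cases n)
  case 0 then show ?thesis by simp
next
  case (Suc m)
  have e1: "Pm (b(n := b n + 1 / b (Suc n))) (Suc m) = Pm b (Suc m)"
    by (rule Pm_cong) (auto simp: Suc)
  have e2: "Pm (b(n := b n + 1 / b (Suc n))) m = Pm b m"
    by (rule Pm_cong) (auto simp: Suc)
  show ?thesis using e1 e2 by (simp add: Suc algebra_simps add_divide_distrib)
qed

lemma Qm_upd: "Qm (b(n := b n + 1 / b (Suc n))) (Suc n) = Qm b (Suc n) + Qm b n / b (Suc n)"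
  for b :: "nat \<Rightarrow> real"
proof (cases n)
  case 0 then show ?thesis by simp
next
  case (Suc m)
  have e1: "Qm (b(n := b n + 1 / b (Suc n))) (Suc m) = Qm b (Suc m)"
    by (rule Qm_cong) (auto simp: Suc)
  have e2: "Qm (b(n := b n + 1 / b (Suc n))) m = Qm b m"
    by (rule Qm_cong) (auto simp: Suc)
  show ?thesis using e1 e2 by (simp add: Suc algebra_simps add_divide_distrib)
qed

lemma cfr_conv: "(\<forall>i\<ge>1. b i > 0) \<Longrightarrow> cfr b n = Pm b (Suc n) / Qm b (Suc n)"
proof (induction n arbitrary: b)
  case 0 then show ?case by simp
next
  case (Suc n)
  define b' where "b' = b(n := b n + 1 / b (Suc n))"
  have pos: "\<forall>i\<ge>1. b' i > 0" using Suc.prems by (auto simp: b'_def add_pos_pos)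
  have bn: "b (Suc n) \<noteq> 0" using Suc.prems[rule_format, of "Suc n"] by simp
  have "cfr b (Suc n) = cfr b' n" unfolding b'_def by (rule cfr_last)
  also have "\<dots> = Pm b' (Suc n) / Qm b' (Suc n)" using Suc.IH pos by blast
  also have "\<dots> = (Pm b (Suc n) + Pm b n / b (Suc n)) / (Qm b (Suc n) + Qm b n / b (Suc n))"
    by (simp add: b'_def Pm_upd Qm_upd)
  also have "\<dots> = (b (Suc n) * Pm b (Suc n) + Pm b n) / (b (Suc n) * Qm b (Suc n) + Qm b n)"
  proof -
    have h1: "Pm b (Suc n) + Pm b n / b (Suc n) = (b (Suc n) * Pm b (Suc n) + Pm b n) / b (Suc n)"
      using bn by (simp add: field_simps)
    have h2: "Qm b (Suc n) + Qm b n / b (Suc n) = (b (Suc n) * Qm b (Suc n) + Qm b n) / b (Suc n)"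
      using bn by (simp add: field_simps)
    show ?thesis unfolding h1 h2 using bn by simp
  qed
  finally show ?case by simp
qed

lemma Pm_Qm_det: "Pm b (Suc n) * Qm b n - Pm b n * Qm b (Suc n) = (-1) ^ Suc n"
  by (induction n) (auto simp: algebra_simps)


declare Pm.simps(3)[simp del] Qm.simps(3)[simp del]

context
  fixes b :: "nat \<Rightarrow> real"
  assumes B: "\<forall>i\<ge>1. b i \<ge> 1"
begin

lemma Qm_ge1: "1 \<le> Qm b (Suc n)"
proof (induction n rule: less_induct)
  case (less n)
  show ?case
  proof (cases n)
    case 0 then show ?thesis by simp
  next
    case (Suc m)
    show ?thesis
    proof (cases m)
      case 0 then show ?thesis using Suc B by (auto simp: Qm.simps(3))
    next
      case (Suc k)
      have "1 \<le> b (Suc m)" using B by simp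
      moreover have "1 \<le> Qm b (Suc m)" using less \<open>n = Suc m\<close> by simp
      moreover have "1 \<le> Qm b (Suc k)" using less \<open>n = Suc m\<close> Suc by simp
      ultimately have "1 * 1 \<le> b (Suc m) * Qm b (Suc m)" by (intro mult_mono) auto
      then show ?thesis using \<open>n = Suc m\<close> Suc \<open>1 \<le> Qm b (Suc k)\<close> by (simp add: Qm.simps(3))
    qed
  qed
qed

lemma Qm_nonneg: "0 \<le> Qm b n"
  using Qm_ge1[of "n - 1"] by (cases n) auto

lemma Qm_mono: "Qm b (Suc n) \<le> Qm b (Suc (Suc n))"
proof -
  have "1 * Qm b (Suc n) \<le> b (Suc n) * Qm b (Suc n)"
    using B Qm_nonneg[of "Suc n"] by (intro mult_right_mono) auto
  then show ?thesis using Qm_nonneg[of n] by (simp add: Qm.simps(3))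
qed

lemma Qm_ge_n: "real n \<le> Qm b (Suc n)"
proof (induction n)
  case 0 then show ?case by simp
next
  case (Suc n)
  show ?case
  proof (cases n)
    case 0 then show ?thesis using B by (simp add: Qm.simps(3))
  next
    case (Suc m)
    have "1 * Qm b (Suc n) \<le> b (Suc n) * Qm b (Suc n)"
      using B Qm_nonneg[of "Suc n"] by (intro mult_right_mono) auto
    moreover have "Qm b (Suc (Suc n)) = b (Suc n) * Qm b (Suc n) + Qm b n" by (simp add: Qm.simps(3))
    moreover have "1 \<le> Qm b n" using Qm_ge1[of m] Suc by simp
    ultimately show ?thesis using Suc.IH by simp
  qed
qed

definition "cc n = Pm b (Suc n) / Qm b (Suc n)"
definition "dd n = 1 / (Qm b (Suc n) * Qm b (Suc (Suc n)))"

lemma cc_step: "cc (Suc n) - cc n = (-1)^n * dd n"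
proof -
  have q1: "Qm b (Suc n) \<noteq> 0" "Qm b (Suc (Suc n)) \<noteq> 0"
    using Qm_ge1[of n] Qm_ge1[of "Suc n"] by auto
  have det: "Pm b (Suc (Suc n)) * Qm b (Suc n) - Pm b (Suc n) * Qm b (Suc (Suc n)) = (-1)^n"
    using Pm_Qm_det[of b "Suc n"] by simp
  have "cc (Suc n) - cc n = (Pm b (Suc (Suc n)) * Qm b (Suc n) - Pm b (Suc n) * Qm b (Suc (Suc n)))
          / (Qm b (Suc n) * Qm b (Suc (Suc n)))"
    unfolding cc_def using q1 by (simp add: field_simps)
  also have "\<dots> = (-1)^n * dd n" unfolding det dd_def by simp
  finally show ?thesis .
qed

lemma cc_sum: "cc n = cc 0 + (\<Sum>i<n. (-1)^i * dd i)"
proof (induction n)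
  case 0 then show ?case by simp
next
  case (Suc n) then show ?case using cc_step[of n] by simp
qed

lemma dd_nonneg: "0 \<le> dd n"
  unfolding dd_def using Qm_nonneg[of "Suc n"] Qm_nonneg[of "Suc (Suc n)"] by simp

lemma dd_mono: "dd (Suc n) \<le> dd n"
proof -
  have a: "Qm b (Suc n) \<le> Qm b (Suc (Suc (Suc n)))"
    using Qm_mono[of n] Qm_mono[of "Suc n"] by simp
  have p: "0 < Qm b (Suc n) * Qm b (Suc (Suc n))"
    using Qm_ge1[of n] Qm_ge1[of "Suc n"] by simp
  have "Qm b (Suc n) * Qm b (Suc (Suc n)) \<le> Qm b (Suc (Suc n)) * Qm b (Suc (Suc (Suc n)))"
    using Qm_nonneg[of "Suc n"] Qm_mono[of n] Qm_mono[of "Suc n"] Qm_nonneg[of "Suc (Suc n)"]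
    by (intro mult_mono) auto
  then show ?thesis unfolding dd_def using p by (intro divide_left_mono) auto
qed

lemma dd_zero: "dd \<longlonglongrightarrow> 0"
proof -
  have up: "dd n \<le> 1 / (real n + 1)" for n
  proof -
    have "real n + 1 \<le> Qm b (Suc (Suc n))" using Qm_ge_n[of "Suc n"] by simp
    also have "\<dots> \<le> Qm b (Suc n) * Qm b (Suc (Suc n))"
      using mult_right_mono[of 1 "Qm b (Suc n)" "Qm b (Suc (Suc n))"] Qm_ge1[of n]
        Qm_nonneg[of "Suc (Suc n)"] by simp
    finally have h: "real n + 1 \<le> Qm b (Suc n) * Qm b (Suc (Suc n))" .
    show ?thesis unfolding dd_def
      by (rule divide_left_mono[OF h]) (use Qm_ge1[of n] Qm_ge1[of "Suc n"] in auto)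
  qed
  have lim: "(\<lambda>n. 1 / (real n + 1)) \<longlonglongrightarrow> 0"
    using LIMSEQ_inverse_real_of_nat by (simp add: inverse_eq_divide add.commute)
  show ?thesis
  proof (rule tendsto_sandwich[where f="\<lambda>_. 0" and h="\<lambda>n. 1 / (real n + 1)"])
    show "eventually (\<lambda>n. 0 \<le> dd n) sequentially" by (rule always_eventually) (rule allI, rule dd_nonneg)
    show "eventually (\<lambda>n. dd n \<le> 1 / (real n + 1)) sequentially" by (rule always_eventually) (rule allI, rule up)
    show "(\<lambda>_. 0) \<longlonglongrightarrow> (0::real)" by (rule tendsto_const)
    show "(\<lambda>n. 1 / (real n + 1)) \<longlonglongrightarrow> 0" by (rule lim)
  qed
qed

lemma cc_limit:
  "\<exists>L. cc \<longlonglongrightarrow> L \<and> (\<forall>n. cc (2*n) \<le> L) \<and> (\<forall>n. L \<le> cc (2*n+1))"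
proof -
  note lb = summable_Leibniz'[OF dd_zero dd_nonneg dd_mono]
  define L where "L = cc 0 + (\<Sum>i. (-1)^i * dd i)"
  have "(\<lambda>n. \<Sum>i<n. (-1)^i * dd i) \<longlonglongrightarrow> (\<Sum>i. (-1)^i * dd i)"
    using summable_LIMSEQ[OF lb(1)] by simp
  then have "(\<lambda>n. cc 0 + (\<Sum>i<n. (-1)^i * dd i)) \<longlonglongrightarrow> L"
    unfolding L_def by (intro tendsto_add) auto
  moreover have "cc = (\<lambda>n. cc 0 + (\<Sum>i<n. (-1)^i * dd i))" by (rule ext, rule cc_sum)
  ultimately have "cc \<longlonglongrightarrow> L" by simp
  moreover have "\<forall>n. cc (2*n) \<le> L"
  proof
    fix n show "cc (2*n) \<le> L" unfolding L_def using lb(2)[of n] cc_sum[of "2*n"] by linarith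
  qed
  moreover have "\<forall>n. L \<le> cc (2*n+1)"
  proof
    fix n show "L \<le> cc (2*n+1)" unfolding L_def using lb(4)[of n] cc_sum[of "2*n+1"] by linarith
  qed
  ultimately show ?thesis by blast
qed

end


lemma Pm_parity:
  fixes a :: "nat \<Rightarrow> int"
  assumes a0: "a 0 = 0" and a1: "a 1 = 2" and ev: "\<forall>k\<ge>1. a (2*k) = 4"
  shows "even (Pm a (Suc (2*j))) \<and> odd (Pm a (Suc (2*j+1)))"
proof (induction j)
  case 0 then show ?case using a0 a1 by (simp add: Pm.simps(3))
next
  case (Suc j)
  have e4: "a (Suc (Suc (2*j))) = 4" using ev[rule_format, of "Suc j"] by simp
  have h1: "Pm a (Suc (2 * Suc j)) = a (Suc (Suc (2*j))) * Pm a (Suc (Suc (2*j))) + Pm a (Suc (2*j))"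
    by (simp add: Pm.simps(3))
  have h2: "Pm a (Suc (2 * Suc j + 1)) = a (Suc (2 * Suc j)) * Pm a (Suc (2 * Suc j)) + Pm a (Suc (2*j+1))"
    by (simp add: Pm.simps(3))
  have E: "even (Pm a (Suc (2 * Suc j)))" using h1 e4 Suc.IH by simp
  have O: "odd (Pm a (Suc (2 * Suc j + 1)))" using h2 E Suc.IH by simp
  show ?case using E O by simp
qed

lemma part1:
  fixes a :: "nat \<Rightarrow> int"
  assumes a0: "a 0 = 0" and a1: "a 1 = 2" and ev: "\<forall>k\<ge>1. a (2*k) = 4"
    and od: "\<forall>k\<ge>1. a (2*k+1) > 0"
  shows "infinite (A_set (exp (2 / cfrac_val a)))"
proof -
  define b where "b = (\<lambda>i. real_of_int (a i))"
  have B: "\<forall>i\<ge>1. b i \<ge> 1"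
  proof (intro allI impI)
    fix i :: nat assume i1: "1 \<le> i"
    show "1 \<le> b i"
    proof (cases "even i")
      case True
      then obtain k where ik: "i = 2*k" by blast
      with i1 have "k \<ge> 1" by simp
      then show ?thesis using ev ik b_def by simp
    next
      case False
      then obtain k where ik: "i = 2*k+1" using oddE by blast
      show ?thesis
      proof (cases "k = 0")
        case True then show ?thesis using a1 ik b_def by simp
      next
        case False
        then have "a i > 0" using od ik by simp
        then show ?thesis using b_def by simp
      qed
    qed
  qed
  have Bp: "\<forall>i\<ge>1. b i > 0" using B by (meson less_le_trans zero_less_one)
  have cf: "cfrac_fin a = cc b"
  proof
    fix n show "cfrac_fin a n = cc b n"
      unfolding cfrac_fin_cfr b_def[symmetric] using cfr_conv[OF Bp] by (simp add: cc_def[OF B])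
  qed
  obtain L where L: "cc b \<longlonglongrightarrow> L" "\<forall>n. cc b (2*n) \<le> L" "\<forall>n. L \<le> cc b (2*n+1)"
    using cc_limit[OF B] by blast
  have cv: "cfrac_val a = L" unfolding cfrac_val_def cf using L(1) by (rule limI)
  have a2: "a 2 = 4" using ev[rule_format, of 1] by simp
  have c1: "cc b 1 = 1/2" unfolding cc_def[OF B] using a0 a1 by (simp add: b_def Pm.simps(3) Qm.simps(3))
  have c2: "cc b 2 = 4/9" unfolding cc_def[OF B] using a0 a1 a2
    by (simp add: b_def Pm.simps(3) Qm.simps(3) eval_nat_numeral)
  have L1: "4/9 \<le> L" using L(2)[rule_format, of 1] c2 by simp
  have L2: "L \<le> 1/2" using L(3)[rule_format, of 0] c1 by simp
  have claim: "nat (Qm a (Suc (2*j+1))) \<in> A_set (exp (2/L)) \<and> real (2*j+1) \<le> real (nat (Qm a (Suc (2*j+1))))"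
    if j4: "j \<ge> 4" for j
  proof -
    define k where "k = 2*j+1"
    define q where "q = Qm b (Suc k)"
    define p where "p = Pm b (Suc k)"
    have qa: "q = of_int (Qm a (Suc k))" unfolding q_def b_def by (rule Qm_of_int)
    have pa: "p = of_int (Pm a (Suc k))" unfolding p_def b_def by (rule Pm_of_int)
    have q1: "q \<ge> 1" unfolding q_def by (rule Qm_ge1[OF B])
    have nq: "real (nat (Qm a (Suc k))) = q" using qa q1 by simp
    have qk: "real k \<le> q" unfolding q_def by (rule Qm_ge_n[OF B])
    have q9: "9 \<le> q" using qk j4 unfolding k_def by simp
    have odd: "odd (Pm a (Suc k))" using Pm_parity[OF a0 a1 ev, of j] unfolding k_def by simp
    define m where "m = (Pm a (Suc k) - 1) div 2"
    have pmi: "Pm a (Suc k) = 2*m + 1" unfolding m_def using odd by presburger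
    have pm: "p = 2*m + 1" unfolding pa pmi by simp
    have ck: "cc b k = p/q" unfolding cc_def[OF B] p_def q_def ..
    have st1: "cc b (Suc k) - cc b k = - dd b k"
      using cc_step[OF B, of k] unfolding k_def by simp
    have st2: "cc b (Suc (Suc k)) - cc b (Suc k) = dd b (Suc k)"
      using cc_step[OF B, of "Suc k"] unfolding k_def by simp
    have lo: "cc b (Suc k) \<le> L" using L(2)[rule_format, of "Suc j"] unfolding k_def by simp
    have hi: "L \<le> cc b (Suc (Suc k))" using L(3)[rule_format, of "Suc j"] unfolding k_def by simp
    have Q2: "Qm b (Suc (Suc k)) = 4 * q + Qm b k"
    proof -
      have "b (Suc k) = 4" unfolding b_def k_def using ev[rule_format, of "Suc j"] by simp
      then show ?thesis unfolding q_def by (simp add: Qm.simps(3))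
    qed
    have Qk: "Qm b k \<ge> 1" using Qm_ge1[OF B, of "2*j"] unfolding k_def by simp
    have Q3: "Qm b (Suc (Suc (Suc k))) \<ge> Qm b (Suc (Suc k)) + q"
    proof -
      have "1 * Qm b (Suc (Suc k)) \<le> b (Suc (Suc k)) * Qm b (Suc (Suc k))"
        using B Qm_nonneg[OF B, of "Suc (Suc k)"] by (intro mult_right_mono) auto
      then show ?thesis unfolding q_def by (simp add: Qm.simps(3))
    qed
    have Q2p: "Qm b (Suc (Suc k)) > 0" using Q2 q1 Qk by simp
    have ddk: "dd b k = 1 / (q * Qm b (Suc (Suc k)))" unfolding dd_def[OF B] q_def ..
    have ddk1: "dd b (Suc k) = 1 / (Qm b (Suc (Suc k)) * Qm b (Suc (Suc (Suc k))))" unfolding dd_def[OF B] ..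
    have dlt: "dd b (Suc k) < dd b k"
    proof -
      have "q * Qm b (Suc (Suc k)) < Qm b (Suc (Suc (Suc k))) * Qm b (Suc (Suc k))"
        using Q3 Q2p q1 by (intro mult_strict_right_mono) auto
      then show ?thesis unfolding ddk ddk1 using q1 Q2p
        by (intro divide_strict_left_mono) (auto simp: mult.commute)
    qed
    define \<delta> where "\<delta> = p - q * L"
    have dq: "\<delta> = q * (cc b k - L)" unfolding \<delta>_def ck using q1 by (simp add: field_simps)
    have d1: "0 < \<delta>" unfolding dq using q1 hi st1 st2 dlt by (intro mult_pos_pos) auto
    have "\<delta> \<le> q * dd b k" unfolding dq using q1 lo st1 by (intro mult_left_mono) auto
    also have "q * dd b k = 1 / Qm b (Suc (Suc k))" unfolding ddk using q1 by simp
    also have "\<dots> < 1 / (4*q)" using Q2 Qk q1 by (intro divide_strict_left_mono) auto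
    finally have d2: "\<delta> < 1 / (4*q)" .
    have eq: "q*L = 2*m + 1 - \<delta>" unfolding \<delta>_def pm by simp
    have "nat (Qm a (Suc k)) \<in> A_set (exp (2/L))"
      by (rule inA[OF nq L1 L2 q9 d1 d2 eq])
    then show ?thesis using nq qk unfolding k_def by simp
  qed
  have "\<forall>N. \<exists>n\<in>A_set (exp (2/L)). N \<le> n"
  proof
    fix N :: nat
    have "N + 4 \<ge> 4" by simp
    from claim[OF this] have c1: "nat (Qm a (Suc (2*(N+4)+1))) \<in> A_set (exp (2/L))"
      and c2: "2*(N+4)+1 \<le> nat (Qm a (Suc (2*(N+4)+1)))" by (auto simp only: of_nat_le_iff)
    have "N \<le> nat (Qm a (Suc (2*(N+4)+1)))" by (rule le_trans[OF _ c2]) simp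
    with c1 show "\<exists>n\<in>A_set (exp (2/L)). N \<le> n" by blast
  qed
  then show ?thesis unfolding cv finite_nat_set_iff_bounded_le
    by (metis Suc_n_not_le_n le_trans)
qed


lemma cfrac_conv_gen:
  fixes a :: "nat \<Rightarrow> int"
  assumes A: "\<forall>i\<ge>1. a i \<ge> 1"
  shows "\<exists>L. cfrac_fin a \<longlonglongrightarrow> L \<and> cfrac_fin a 0 \<le> L"
proof -
  define b where "b = (\<lambda>i. real_of_int (a i))"
  have B: "\<forall>i\<ge>1. b i \<ge> 1" using A by (simp add: b_def)
  have Bp: "\<forall>i\<ge>1. b i > 0" using B by (meson less_le_trans zero_less_one)
  have cf: "cfrac_fin a = cc b"
  proof
    fix n show "cfrac_fin a n = cc b n"
      unfolding cfrac_fin_cfr b_def[symmetric] using cfr_conv[OF Bp] by (simp add: cc_def[OF B])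
  qed
  obtain L where L: "cc b \<longlonglongrightarrow> L" "\<forall>n. cc b (2*n) \<le> L"
    using cc_limit[OF B] by blast
  show ?thesis using L cf by (metis mult_0_right)
qed

lemma part2:
  fixes c :: nat
  assumes c0: "c > 0"
  shows "infinite (A_set (exp (4 - real c + sqrt (real c * (real c + 1)))))"
proof -
  define a :: "nat \<Rightarrow> int" where
    "a = (\<lambda>i. if i = 0 then 0 else if i = 1 then 2 else if even i then 4 else int c)"
  define y :: "nat \<Rightarrow> int" where "y = (\<lambda>i. if even i then 4 else int c)"
  have ay: "(\<lambda>i. a (Suc (Suc i))) = y" by (rule ext) (simp add: a_def y_def)
  have yy: "(\<lambda>i. y (Suc (Suc i))) = y" by (rule ext) (simp add: y_def)
  have y0: "y 0 = 4" and y1: "y 1 = int c" by (simp_all add: y_def)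
  have Ay: "\<forall>i\<ge>1. y i \<ge> 1" using c0 by (simp add: y_def)
  obtain Y where Y: "cfrac_fin y \<longlonglongrightarrow> Y" "cfrac_fin y 0 \<le> Y"
    using cfrac_conv_gen[OF Ay] by blast
  have Y4: "4 \<le> Y" using Y(2) y0 by simp
  have rec: "cfrac_fin y (n + 2) = 4 + 1 / (real c + 1 / cfrac_fin y n)" for n
  proof -
    have "cfrac_fin y (Suc (Suc n)) = of_int (y 0) + 1 / (of_int (y 1) + 1 / cfrac_fin (\<lambda>i. y (Suc (Suc i))) n)"
      by simp
    then show ?thesis unfolding yy y0 y1 by simp
  qed
  have l1: "(\<lambda>n. cfrac_fin y (n + 2)) \<longlonglongrightarrow> Y"
    by (rule LIMSEQ_ignore_initial_segment[OF Y(1)])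
  have cpos: "real c > 0" using c0 by simp
  have l2: "(\<lambda>n. 4 + 1 / (real c + 1 / cfrac_fin y n)) \<longlonglongrightarrow> 4 + 1 / (real c + 1 / Y)"
  proof -
    have "real c + 1 / Y > 0" using cpos Y4 by (simp add: add_pos_pos)
    then show ?thesis using Y4
      by (intro tendsto_intros Y(1)) auto
  qed
  have fe: "(\<lambda>n. cfrac_fin y (n + 2)) = (\<lambda>n. 4 + 1 / (real c + 1 / cfrac_fin y n))"
    by (rule ext, rule rec)
  have Yeq: "Y = 4 + 1 / (real c + 1 / Y)"
    by (rule LIMSEQ_unique[OF l1]) (subst fe, rule l2)
  have quad: "real c * Y^2 - 4 * real c * Y - 4 = 0"
  proof -
    have ne: "real c * Y + 1 > 0" using cpos Y4 by (simp add: add_pos_pos)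
    have "1 / (real c + 1 / Y) = Y / (real c * Y + 1)" using Y4 by (simp add: field_simps)
    then have "Y = 4 + Y / (real c * Y + 1)" using Yeq by simp
    then have "Y * (real c * Y + 1) = 4 * (real c * Y + 1) + Y" using ne by (simp add: field_simps)
    then show ?thesis by (simp add: algebra_simps power2_eq_square)
  qed
  define s where "s = sqrt (real c * (real c + 1))"
  have s2: "s^2 = real c * real c + real c" unfolding s_def by (simp add: algebra_simps)
  have sc: "s > real c"
  proof -
    have "real c * real c < real c * (real c + 1)" using cpos by simp
    then have "sqrt (real c * real c) < s" unfolding s_def by (simp only: real_sqrt_less_iff)
    then show ?thesis using cpos by simp
  qed
  define t where "t = s - real c"
  have tp: "t > 0" using sc by (simp add: t_def)
  define Y' where "Y' = 2 / t"
  have Y'p: "Y' > 0" using tp by (simp add: Y'_def)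
  have quad': "real c * Y'^2 - 4 * real c * Y' - 4 = 0"
  proof -
    have "real c * Y'^2 - 4 * real c * Y' - 4
        = (4 * real c - 8 * real c * t - 4 * t^2) / t^2"
      unfolding Y'_def using tp by (simp add: field_simps power2_eq_square)
    also have "4 * real c - 8 * real c * t - 4 * t^2 = 0"
      unfolding t_def using s2 by (simp add: algebra_simps power2_eq_square)
    finally show ?thesis by simp
  qed
  have "real c * (Y - Y') * (Y + Y' - 4) = 0"
    using quad quad' by (simp add: algebra_simps power2_eq_square)
  moreover have "Y + Y' - 4 > 0" using Y4 Y'p by simp
  ultimately have YY: "Y = Y'" using cpos by simp
  have rA: "cfrac_fin a (n + 2) = 1 / (2 + 1 / cfrac_fin y n)" for n
  proof -
    have "cfrac_fin a (Suc (Suc n)) = of_int (a 0) + 1 / (of_int (a 1) + 1 / cfrac_fin (\<lambda>i. a (Suc (Suc i))) n)"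
      by simp
    then show ?thesis unfolding ay by (simp add: a_def)
  qed
  have "(\<lambda>n. 1 / (2 + 1 / cfrac_fin y n)) \<longlonglongrightarrow> 1 / (2 + 1 / Y)"
  proof -
    have "2 + 1 / Y > 0" using Y4 by (simp add: add_pos_pos)
    then show ?thesis using Y4 by (intro tendsto_intros Y(1)) auto
  qed
  moreover have "(\<lambda>n. cfrac_fin a (n + 2)) = (\<lambda>n. 1 / (2 + 1 / cfrac_fin y n))"
    by (rule ext, rule rA)
  ultimately have "(\<lambda>n. cfrac_fin a (n + 2)) \<longlonglongrightarrow> 1 / (2 + 1 / Y)" by simp
  then have "cfrac_fin a \<longlonglongrightarrow> 1 / (2 + 1 / Y)" by (rule LIMSEQ_offset)
  then have cv: "cfrac_val a = 1 / (2 + 1 / Y)" unfolding cfrac_val_def by (rule limI)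
  have "2 / cfrac_val a = 4 + 2 / Y" unfolding cv using Y4 by (simp add: field_simps)
  also have "2 / Y = s - real c" unfolding YY Y'_def t_def using sc by simp
  finally have th: "exp (2 / cfrac_val a) = exp (4 - real c + sqrt (real c * (real c + 1)))"
    unfolding s_def by simp
  have h1: "a 0 = 0" "a 1 = 2" by (simp_all add: a_def)
  have h3: "\<forall>k\<ge>1. a (2*k) = 4" by (simp add: a_def)
  have h4: "\<forall>k\<ge>1. a (2*k+1) > 0" using c0 by (simp add: a_def)
  show ?thesis using part1[OF h1 h3 h4] th by simp
qed

theorem theorem6:
  shows "(\<forall>a :: nat \<Rightarrow> int.
            a 0 = 0 \<longrightarrow> a 1 = 2 \<longrightarrow> (\<forall>k\<ge>1. a (2*k) = 4) \<longrightarrow>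
            (\<forall>k\<ge>1. a (2*k+1) > 0) \<longrightarrow>
            infinite (A_set (exp (2 / cfrac_val a))))
       \<and> (\<forall>c :: nat. c > 0 \<longrightarrow>
            infinite (A_set (exp (4 - real c + sqrt (real c * (real c + 1))))))"
  using part1 part2 by blast

end
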